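(* Let $l,l'$ be lines intersecting at a point $O$, and let $X,X'$ be two points lying in the same quadrant into which $l,l'$ divide the plane. Let $M$ be the midpoint of $X,X'$, let $Y$ be the intersection of $l$ with the reflection of $l'$ about $M$, and let $Y'$ be the intersection of $l'$ with the reflection of $l$ about $M$, so that $XYX'Y'$ is a (possibly degenerate) parallelogram. Let $\triangle OYY'$ denote the closed triangle (including its boundary). Then: (1) if $\mathrm{disprod}_{l,l'}(X)<\mathrm{disprod}_{l,l'}(X')$, then $X\in\triangle OYY'$ and $X'\notin\triangle OYY'$; (2) if $\mathrm{disprod}_{l,l'}(X)>\mathrm{disprod}_{l,l'}(X')$, then $X\notin\triangle OYY'$ and $X'\in\triangle OYY'$; (3) if $\mathrm{disprod}_{l,l'}(X)=\mathrm{disprod}_{l,l'}(X')$, then $XYX'Y'$ is degenerate, i.e. its four corners lie on a common line.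
   Context: $d_l(X)$ denotes the distance from the point $X$ to the line $l$, and $\mathrm{disprod}_{l,l'}(X)=d_l(X)\cdot d_{l'}(X)$. *)

theory Defs
  imports "HOL-Analysis.Analysis"
begin

type_synonym point = "real^2"

definition is_line :: "point set \<Rightarrow> bool" where
  "is_line L \<longleftrightarrow> (\<exists>p d. d \<noteq> 0 \<and> L = {p + t *\<^sub>R d | t. True})"

definition dist_line :: "point set \<Rightarrow> point \<Rightarrow> real" where
  "dist_line L X = infdist X L"

definition disprod :: "point set \<Rightarrow> point set \<Rightarrow> point \<Rightarrow> real" where
  "disprod L L' X = dist_line L X * dist_line L' X"

definition same_side :: "point set \<Rightarrow> point \<Rightarrow> point \<Rightarrow> bool" where
  "same_side L X X' \<longleftrightarrow> closed_segment X X' \<inter> L = {}"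

definition same_quadrant :: "point set \<Rightarrow> point set \<Rightarrow> point \<Rightarrow> point \<Rightarrow> bool" where
  "same_quadrant L L' X X' \<longleftrightarrow> same_side L X X' \<and> same_side L' X X'"

definition point_reflect :: "point \<Rightarrow> point \<Rightarrow> point" where
  "point_reflect M P = 2 *\<^sub>R M - P"

end

theory Submission
  imports Defs
begin

definition cr :: "point \<Rightarrow> point \<Rightarrow> real" where "cr x y = x$1*y$2 - x$2*y$1"

lemma norm2: "norm (x::point) ^ 2 = x$1^2 + x$2^2"
  by (simp add: norm_vec_def L2_set_def sum_2)

lemma cr_le: "\<bar>cr w d\<bar> \<le> norm w * norm d"
proof -
  have e: "(norm w * norm d)^2 - (cr w d)^2 = (w$1*d$1+w$2*d$2)^2"
    unfolding power_mult_distrib norm2 cr_def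
    by (simp add: power2_eq_square algebra_simps)
  have "(cr w d)^2 \<le> (norm w * norm d)^2" using e by (smt (verit) zero_le_power2)
  hence "\<bar>cr w d\<bar> \<le> \<bar>norm w * norm d\<bar>" by (simp only: abs_le_square_iff)
  thus ?thesis by simp
qed

lemma proj_alg:
  fixes u1 u2 d1 d2 :: real
  assumes "d1^2 + d2^2 > 0"
  shows "(u1 - ((u1*d1+u2*d2)/(d1^2+d2^2))*d1)^2 + (u2 - ((u1*d1+u2*d2)/(d1^2+d2^2))*d2)^2
     = (u1*d2 - u2*d1)^2 / (d1^2+d2^2)"
proof -
  define s where "s = d1^2+d2^2"
  define k where "k = u1*d1+u2*d2"
  have s0: "s \<noteq> 0" using assms s_def by linarith
  have A0: "(u1 - c * d1)^2 + (u2 - c * d2)^2 = u1^2 + u2^2 - 2 * c * k + c^2 * s" for c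
    unfolding s_def k_def by (simp add: power2_eq_square algebra_simps)
  note A = A0[of "k / s"]
  have B: "u1^2 + u2^2 - 2 * (k / s) * k + (k / s)^2 * s = ((u1^2 + u2^2) * s - k^2) / s"
    using s0 by (simp add: power2_eq_square field_simps)
  have C: "(u1^2 + u2^2) * s - k^2 = (u1*d2 - u2*d1)^2"
    unfolding s_def k_def by (simp add: power2_eq_square algebra_simps)
  show ?thesis using A B C unfolding s_def k_def by simp
qed

lemma infdist_line:
  assumes "d \<noteq> 0"
  shows "infdist X {p + t *\<^sub>R d | t. True} = \<bar>cr (X - p) d\<bar> / norm d"
proof -
  let ?L = "{p + t *\<^sub>R d | t. True}"
  have nd: "norm d > 0" using assms by simp
  have lb: "\<bar>cr (X - p) d\<bar> / norm d \<le> dist X y" if yL: "y \<in> ?L" for y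
  proof -
    obtain t where y: "y = p + t *\<^sub>R d" using yL by auto
    have "cr (X - y) d = cr (X - p) d" unfolding y cr_def by (simp add: algebra_simps)
    moreover have "\<bar>cr (X - y) d\<bar> \<le> norm (X - y) * norm d" by (rule cr_le)
    ultimately show ?thesis using nd by (simp add: dist_norm divide_le_eq)
  qed
  define t0 where "t0 = ((X - p) \<bullet> d) / (norm d)^2"
  have y0: "p + t0 *\<^sub>R d \<in> ?L" by auto
  have "(dist X (p + t0 *\<^sub>R d))^2 = (\<bar>cr (X - p) d\<bar> / norm d)^2"
  proof -
    have nd2: "(norm d)^2 = d$1^2 + d$2^2" by (rule norm2)
    have pos: "d$1^2 + d$2^2 > 0" using nd nd2 by (metis zero_less_power)
    have ip: "(X - p) \<bullet> d = (X$1 - p$1)*d$1 + (X$2-p$2)*d$2"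
      by (simp add: inner_vec_def sum_2)
    show ?thesis
      unfolding dist_norm norm2 power_divide nd2 t0_def ip cr_def power2_abs
      using proj_alg[OF pos, of "X$1 - p$1" "X$2 - p$2"] by (simp add: algebra_simps)
  qed
  hence eq: "dist X (p + t0 *\<^sub>R d) = \<bar>cr (X - p) d\<bar> / norm d"
    by (simp add: power2_eq_iff_nonneg)
  have ne: "?L \<noteq> {}" by auto
  show ?thesis
  proof (rule antisym)
    show "infdist X ?L \<le> \<bar>cr (X - p) d\<bar> / norm d" using infdist_le[OF y0, of X] eq by linarith
    show "\<bar>cr (X - p) d\<bar> / norm d \<le> infdist X ?L"
      unfolding infdist_notempty[OF ne] by (rule cINF_greatest[OF ne]) (rule lb)
  qed
qed

lemma cr_simps[simp]:
  "cr (x + y) z = cr x z + cr y z" "cr z (x + y) = cr z x + cr z y"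
  "cr (x - y) z = cr x z - cr y z" "cr z (x - y) = cr z x - cr z y"
  "cr (c *\<^sub>R x) z = c * cr x z" "cr z (c *\<^sub>R x) = c * cr z x"
  "cr x x = 0" "cr (-x) z = - cr x z" "cr z (-x) = - cr z x"
  by (simp_all add: cr_def algebra_simps)

lemma cr_swap: "cr y x = - cr x y" by (simp add: cr_def)

lemma coord_unique:
  assumes "cr d e \<noteq> 0" "a *\<^sub>R d + b *\<^sub>R e = a' *\<^sub>R d + b' *\<^sub>R e"
  shows "a = a' \<and> b = b'"
proof -
  have "cr (a *\<^sub>R d + b *\<^sub>R e) e = cr (a' *\<^sub>R d + b' *\<^sub>R e) e" using assms(2) by simp
  hence 1: "a * cr d e = a' * cr d e" by simp
  have "cr d (a *\<^sub>R d + b *\<^sub>R e) = cr d (a' *\<^sub>R d + b' *\<^sub>R e)" using assms(2) by simp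
  hence 2: "b * cr d e = b' * cr d e" by simp
  show ?thesis using 1 2 assms(1) by simp
qed

lemma coord_exists:
  assumes "cr d e \<noteq> 0"
  shows "w = (cr w e / cr d e) *\<^sub>R d + (cr d w / cr d e) *\<^sub>R e"
proof -
  let ?D = "cr d e"
  have 1: "cr w e * d$1 + cr d w * e$1 = w$1 * ?D" "cr w e * d$2 + cr d w * e$2 = w$2 * ?D"
    unfolding cr_def by (simp_all add: algebra_simps)
  have "w$1 = (cr w e / ?D) * d$1 + (cr d w / ?D) * e$1"
    using 1(1) assms by (simp add: field_simps)
  moreover have "w$2 = (cr w e / ?D) * d$2 + (cr d w / ?D) * e$2"
    using 1(2) assms by (simp add: field_simps)
  ultimately show ?thesis unfolding vec_eq_iff forall_2 by simp
qed

lemma hull_mem: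
  assumes D: "cr d e \<noteq> 0" and pos: "a > 0" "b > 0" "a' > 0" "b' > 0"
    and X: "X = Ov + a *\<^sub>R d + b *\<^sub>R e"
    and Y: "Y = Ov + (a+a') *\<^sub>R d" and Y': "Y' = Ov + (b+b') *\<^sub>R e"
  shows "X \<in> convex hull {Ov, Y, Y'} \<longleftrightarrow> a*b \<le> a'*b'"
proof -
  have gen: "u *\<^sub>R Ov + v *\<^sub>R Y + w *\<^sub>R Y' = (u+v+w) *\<^sub>R Ov + (v * (a + a')) *\<^sub>R d + (w * (b + b')) *\<^sub>R e"
    for u v w unfolding Y Y' by (simp add: algebra_simps)
  show ?thesis
  proof
    assume "X \<in> convex hull {Ov, Y, Y'}"
    then obtain u v w where uvw: "0 \<le> u" "0 \<le> v" "0 \<le> w" "u+v+w = 1"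
      and Xe: "X = u *\<^sub>R Ov + v *\<^sub>R Y + w *\<^sub>R Y'"
      unfolding convex_hull_3 by blast
    have "Ov + (a *\<^sub>R d + b *\<^sub>R e) = Ov + ((v * (a + a')) *\<^sub>R d + (w * (b + b')) *\<^sub>R e)"
      using Xe gen[of u v w] uvw(4) X by (simp add: add.assoc)
    hence "a *\<^sub>R d + b *\<^sub>R e = (v * (a + a')) *\<^sub>R d + (w * (b + b')) *\<^sub>R e"
      by (rule add_left_imp_eq)
    with D have ea: "a = v * (a + a')" and eb: "b = w * (b + b')" using coord_unique by blast+
    have "v + w \<le> 1" using uvw by linarith
    hence "(v + w) * ((a+a')*(b+b')) \<le> 1 * ((a+a')*(b+b'))"
      using pos by (intro mult_right_mono) auto
    hence "a*(b+b') + b*(a+a') \<le> (a+a')*(b+b')"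
      by (subst ea, subst eb) (simp add: algebra_simps)
    thus "a*b \<le> a'*b'" by (simp add: algebra_simps)
  next
    assume le: "a*b \<le> a'*b'"
    define v where "v = a/(a+a')"
    define w where "w = b/(b+b')"
    define u where "u = 1 - v - w"
    have v1: "v * (a + a') = a" unfolding v_def using pos by simp
    have w1: "w * (b + b') = b" unfolding w_def using pos by simp
    have "u = (a'*b' - a*b)/((a+a')*(b+b'))" unfolding u_def v_def w_def using pos
      by (simp add: field_simps; simp add: algebra_simps)
    hence u0: "u \<ge> 0" using le pos by simp
    have "X = u *\<^sub>R Ov + v *\<^sub>R Y + w *\<^sub>R Y'"
      unfolding gen v1 w1 X by (simp add: u_def)
    moreover have "v \<ge> 0" "w \<ge> 0" unfolding v_def w_def using pos by simp_all
    ultimately show "X \<in> convex hull {Ov, Y, Y'}" unfolding convex_hull_3 using u0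
      by (intro CollectI exI[of _ u] exI[of _ v] exI[of _ w]) (simp add: u_def)
  qed
qed

lemma core_coll:
  assumes pos: "a > 0" "b > 0" "a' > 0" "b' > 0" and eq: "a*b = a'*b'"
    and X: "X = Ov + a *\<^sub>R d + b *\<^sub>R e" and X': "X' = Ov + a' *\<^sub>R d + b' *\<^sub>R e"
    and Y: "Y = Ov + (a+a') *\<^sub>R d" and Y': "Y' = Ov + (b+b') *\<^sub>R e"
  shows "collinear {X, Y, X', Y'}"
proof -
  have k: "Y + c *\<^sub>R (Y' - Y) = Ov + ((a+a')*(1-c)) *\<^sub>R d + (c*(b+b')) *\<^sub>R e" for c
    unfolding Y Y' by (simp add: algebra_simps)
  have "X = Y + (b/(b+b')) *\<^sub>R (Y' - Y)"
  proof -
    have "(a+a')*(1 - b/(b+b')) = a" using pos eq by (simp add: field_simps; simp add: algebra_simps)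
    moreover have "(b/(b+b'))*(b+b') = b" using pos by simp
    ultimately show ?thesis unfolding k X by simp
  qed
  moreover have "X' = Y + (b'/(b+b')) *\<^sub>R (Y' - Y)"
  proof -
    have "(a+a')*(1 - b'/(b+b')) = a'" using pos eq by (simp add: field_simps; simp add: algebra_simps)
    moreover have "(b'/(b+b'))*(b+b') = b'" using pos by simp
    ultimately show ?thesis unfolding k X' by simp
  qed
  moreover have "Y = Y + 0 *\<^sub>R (Y' - Y)" "Y' = Y + 1 *\<^sub>R (Y' - Y)" by simp_all
  ultimately show ?thesis unfolding collinear_alt by blast
qed


lemma line_through:
  assumes "is_line L" "q \<in> L"
  shows "\<exists>d. d \<noteq> 0 \<and> L = {q + t *\<^sub>R d | t. True}"
proof -
  obtain p d where d: "d \<noteq> 0" and L: "L = {p + t *\<^sub>R d | t. True}"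
    using assms(1) unfolding is_line_def by blast
  obtain t0 where q: "q = p + t0 *\<^sub>R d" using assms(2) L by blast
  have "{p + t *\<^sub>R d | t. True} = {q + t *\<^sub>R d | t. True}"
  proof (intro set_eqI iffI)
    fix x assume "x \<in> {p + t *\<^sub>R d | t. True}"
    then obtain t where "x = p + t *\<^sub>R d" by blast
    hence "x = q + (t - t0) *\<^sub>R d" unfolding q by (simp add: algebra_simps)
    thus "x \<in> {q + t *\<^sub>R d | t. True}" by blast
  next
    fix x assume "x \<in> {q + t *\<^sub>R d | t. True}"
    then obtain t where "x = q + t *\<^sub>R d" by blast
    hence "x = p + (t + t0) *\<^sub>R d" unfolding q by (simp add: algebra_simps)
    thus "x \<in> {p + t *\<^sub>R d | t. True}" by blast
  qed
  thus ?thesis using d L by blast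
qed

lemma same_side_coord:
  assumes "closed_segment X X' \<inter> {Ov + t *\<^sub>R d | t. True} = {}"
    and X: "X = Ov + a *\<^sub>R d + b *\<^sub>R e" and X': "X' = Ov + a' *\<^sub>R d + b' *\<^sub>R e"
  shows "b * b' > 0"
proof (rule ccontr)
  assume "\<not> b * b' > 0"
  hence bb: "b * b' \<le> 0" by simp
  obtain s where s: "0 \<le> s" "s \<le> 1" "(1 - s) * b + s * b' = 0"
  proof (cases "b = b'")
    case True
    hence "b = 0" using bb by (auto simp: mult_le_0_iff)
    thus ?thesis using True that[of 0] by simp
  next
    case False
    define s where "s = b / (b - b')"
    have "(1 - s) * b + s * b' = 0" unfolding s_def using False by (simp add: field_simps)
    moreover have "0 \<le> s \<and> s \<le> 1"
    proof (cases "b > b'")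
      case True
      hence "b \<ge> 0" "b' \<le> 0" using bb by (auto simp: mult_le_0_iff)
      thus ?thesis unfolding s_def using True by (simp add: divide_le_eq_1)
    next
      case F: False
      hence "b < b'" using False by simp
      hence "b \<le> 0" "b' \<ge> 0" using bb by (auto simp: mult_le_0_iff)
      thus ?thesis unfolding s_def using \<open>b < b'\<close> by (simp add: divide_le_eq_1 divide_nonpos_neg)
    qed
    ultimately show ?thesis using that by blast
  qed
  define P where "P = (1 - s) *\<^sub>R X + s *\<^sub>R X'"
  have "P \<in> closed_segment X X'" unfolding P_def closed_segment_def using s by blast
  moreover have "P = Ov + ((1 - s) * a + s * a') *\<^sub>R d + ((1 - s) * b + s * b') *\<^sub>R e"
    unfolding P_def X X' by (simp add: algebra_simps)
  hence "P \<in> {Ov + t *\<^sub>R d | t. True}" using s(3) by auto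
  ultimately show False using assms(1) by blast
qed

lemma dist_formula:
  assumes "d \<noteq> 0" and X: "X = Ov + a *\<^sub>R d + b *\<^sub>R e"
  shows "infdist X {Ov + t *\<^sub>R d | t. True} = \<bar>b\<bar> * \<bar>cr d e\<bar> / norm d"
proof -
  have "cr (X - Ov) d = - b * cr d e" unfolding X by (simp add: cr_swap[of d e])
  thus ?thesis using infdist_line[OF assms(1), of X Ov] by (simp add: abs_mult)
qed

lemma not_parallel:
  assumes "d \<noteq> 0" "e \<noteq> 0" "cr d e = 0"
  shows "{Ov + t *\<^sub>R d | t. True} = {Ov + t *\<^sub>R e | t. True}"
proof -
  obtain c where c: "e = c *\<^sub>R d"
  proof (cases "d$1 = 0")
    case True
    hence "d$2 \<noteq> 0" using assms(1) unfolding vec_eq_iff forall_2 by auto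
    have "d$2 * e$1 = 0" using assms(3) True unfolding cr_def by simp
    hence "e$1 = 0" using \<open>d$2 \<noteq> 0\<close> by simp
    hence "e = (e$2 / d$2) *\<^sub>R d" using True \<open>d$2 \<noteq> 0\<close> unfolding vec_eq_iff forall_2
      by simp
    thus ?thesis using that by blast
  next
    case False
    have "d$1 * e$2 = d$2 * e$1" using assms(3) unfolding cr_def by simp
    hence "e$2 = e$1 / d$1 * d$2" using False by (simp add: field_simps)
    hence "e = (e$1 / d$1) *\<^sub>R d" using False unfolding vec_eq_iff forall_2
      by simp
    thus ?thesis using that by blast
  qed
  have c0: "c \<noteq> 0" using c assms(2) by auto
  show ?thesis
  proof (intro set_eqI iffI)
    fix x assume "x \<in> {Ov + t *\<^sub>R d | t. True}"
    then obtain t where "x = Ov + t *\<^sub>R d" by blast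
    hence "x = Ov + (t / c) *\<^sub>R e" unfolding c using c0 by simp
    thus "x \<in> {Ov + t *\<^sub>R e | t. True}" by blast
  next
    fix x assume "x \<in> {Ov + t *\<^sub>R e | t. True}"
    then obtain t where "x = Ov + t *\<^sub>R e" by blast
    hence "x = Ov + (t * c) *\<^sub>R d" unfolding c by simp
    thus "x \<in> {Ov + t *\<^sub>R d | t. True}" by blast
  qed
qed



theorem lemma8:
  fixes l l' :: "point set" and Ov X X' M Y Y' :: point
  assumes "is_line l" and "is_line l'" and "l \<noteq> l'"
    and "Ov \<in> l" and "Ov \<in> l'"
    and "same_quadrant l l' X X'"
    and "M = midpoint X X'"
    and "Y \<in> l" and "Y \<in> point_reflect M ` l'"
    and "Y' \<in> l'" and "Y' \<in> point_reflect M ` l"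
  shows "(disprod l l' X < disprod l l' X' \<longrightarrow>
            X \<in> convex hull {Ov, Y, Y'} \<and> X' \<notin> convex hull {Ov, Y, Y'})
       \<and> (disprod l l' X > disprod l l' X' \<longrightarrow>
            X \<notin> convex hull {Ov, Y, Y'} \<and> X' \<in> convex hull {Ov, Y, Y'})
       \<and> (disprod l l' X = disprod l l' X' \<longrightarrow> collinear {X, Y, X', Y'})"
proof -
  obtain d where d0: "d \<noteq> 0" and ld: "l = {Ov + t *\<^sub>R d | t. True}"
    using line_through[OF assms(1,4)] by blast
  obtain e where e0: "e \<noteq> 0" and le: "l' = {Ov + t *\<^sub>R e | t. True}"
    using line_through[OF assms(2,5)] by blast
  define D where "D = cr d e"
  have D0: "D \<noteq> 0" using not_parallel[OF d0 e0, of Ov] assms(3) ld le D_def by auto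
  define a where "a = cr (X - Ov) e / D"
  define b where "b = cr d (X - Ov) / D"
  define a' where "a' = cr (X' - Ov) e / D"
  define b' where "b' = cr d (X' - Ov) / D"
  have X: "X = Ov + a *\<^sub>R d + b *\<^sub>R e"
    using coord_exists[of d e "X - Ov"] D0 unfolding a_def b_def D_def
    by (metis add.assoc add.commute diff_add_cancel)
  have X': "X' = Ov + a' *\<^sub>R d + b' *\<^sub>R e"
    using coord_exists[of d e "X' - Ov"] D0 unfolding a'_def b'_def D_def
    by (metis add.assoc add.commute diff_add_cancel)
  have Xs: "X = Ov + b *\<^sub>R e + a *\<^sub>R d" "X' = Ov + b' *\<^sub>R e + a' *\<^sub>R d"
    using X X' by (simp_all add: algebra_simps)
  have bb: "b * b' > 0"
    using same_side_coord[OF _ X X'] assms(6) ld unfolding same_quadrant_def same_side_def by blast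
  have aa: "a * a' > 0"
    using same_side_coord[OF _ Xs] assms(6) le unfolding same_quadrant_def same_side_def by blast
  have dpX: "disprod l l' X = (\<bar>a\<bar> * \<bar>b\<bar>) * (\<bar>D\<bar> * \<bar>D\<bar> / (norm d * norm e))"
    unfolding disprod_def dist_line_def ld le
      dist_formula[OF d0 X] dist_formula[OF e0 Xs(1)] D_def cr_swap[of e d]
    by (simp add: field_simps)
  have dpX': "disprod l l' X' = (\<bar>a'\<bar> * \<bar>b'\<bar>) * (\<bar>D\<bar> * \<bar>D\<bar> / (norm d * norm e))"
    unfolding disprod_def dist_line_def ld le
      dist_formula[OF d0 X'] dist_formula[OF e0 Xs(2)] D_def cr_swap[of e d]
    by (simp add: field_simps)
  have K: "\<bar>D\<bar> * \<bar>D\<bar> / (norm d * norm e) > 0" using D0 d0 e0 by (intro divide_pos_pos mult_pos_pos) auto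
  have M2: "2 *\<^sub>R M = X + X'" unfolding assms(7) midpoint_def by simp
  have Y: "Y = Ov + (a + a') *\<^sub>R d"
  proof -
    obtain t where Yt: "Y = Ov + t *\<^sub>R d" using assms(8) ld by blast
    obtain z where z: "z \<in> l'" "Y = point_reflect M z" using assms(9) by blast
    obtain s where zs: "z = Ov + s *\<^sub>R e" using z(1) le by blast
    have "Y = X + X' - z" using z(2) M2 unfolding point_reflect_def by simp
    hence "Ov + t *\<^sub>R d = Ov + (a + a') *\<^sub>R d + (b + b' - s) *\<^sub>R e"
      unfolding Yt zs X X' by (simp add: algebra_simps)
    hence "t *\<^sub>R d + 0 *\<^sub>R e = (a + a') *\<^sub>R d + (b + b' - s) *\<^sub>R e"
      by (simp add: add.assoc)
    hence "t = a + a'" using coord_unique D0 D_def by blast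
    thus ?thesis using Yt by simp
  qed
  have Y': "Y' = Ov + (b + b') *\<^sub>R e"
  proof -
    obtain t where Yt: "Y' = Ov + t *\<^sub>R e" using assms(10) le by blast
    obtain z where z: "z \<in> l" "Y' = point_reflect M z" using assms(11) by blast
    obtain s where zs: "z = Ov + s *\<^sub>R d" using z(1) ld by blast
    have "Y' = X + X' - z" using z(2) M2 unfolding point_reflect_def by simp
    hence "Ov + t *\<^sub>R e = Ov + (a + a' - s) *\<^sub>R d + (b + b') *\<^sub>R e"
      unfolding Yt zs X X' by (simp add: algebra_simps)
    hence "0 *\<^sub>R d + t *\<^sub>R e = (a + a' - s) *\<^sub>R d + (b + b') *\<^sub>R e"
      by (simp add: add.assoc)
    hence "t = b + b'" using coord_unique D0 D_def by blast
    thus ?thesis using Yt by simp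
  qed
  define \<sigma> :: real where "\<sigma> = (if a > 0 then 1 else -1)"
  define \<tau> :: real where "\<tau> = (if b > 0 then 1 else -1)"
  have sa: "a = \<sigma> * \<bar>a\<bar>" "a' = \<sigma> * \<bar>a'\<bar>" using aa unfolding \<sigma>_def
    by (auto simp: zero_less_mult_iff)
  have sb: "b = \<tau> * \<bar>b\<bar>" "b' = \<tau> * \<bar>b'\<bar>" using bb unfolding \<tau>_def
    by (auto simp: zero_less_mult_iff)
  define d1 where "d1 = \<sigma> *\<^sub>R d"
  define e1 where "e1 = \<tau> *\<^sub>R e"
  have D1: "cr d1 e1 \<noteq> 0" unfolding d1_def e1_def using D0 D_def \<sigma>_def \<tau>_def by simp
  have pos: "\<bar>a\<bar> > 0" "\<bar>b\<bar> > 0" "\<bar>a'\<bar> > 0" "\<bar>b'\<bar> > 0" using aa bb by auto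
  have X1: "X = Ov + \<bar>a\<bar> *\<^sub>R d1 + \<bar>b\<bar> *\<^sub>R e1"
    using X sa sb unfolding d1_def e1_def by (metis scaleR_scaleR mult.commute)
  have X1': "X' = Ov + \<bar>a'\<bar> *\<^sub>R d1 + \<bar>b'\<bar> *\<^sub>R e1"
    using X' sa sb unfolding d1_def e1_def by (metis scaleR_scaleR mult.commute)
  have Y1: "Y = Ov + (\<bar>a\<bar> + \<bar>a'\<bar>) *\<^sub>R d1"
    using Y sa unfolding d1_def by (metis scaleR_scaleR mult.commute distrib_left)
  have Y1': "Y' = Ov + (\<bar>b\<bar> + \<bar>b'\<bar>) *\<^sub>R e1"
    using Y' sb unfolding e1_def by (metis scaleR_scaleR mult.commute distrib_left)
  have Y1s: "Y = Ov + (\<bar>a'\<bar> + \<bar>a\<bar>) *\<^sub>R d1" "Y' = Ov + (\<bar>b'\<bar> + \<bar>b\<bar>) *\<^sub>R e1"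
    using Y1 Y1' by (simp_all add: add.commute)
  have HX: "X \<in> convex hull {Ov, Y, Y'} \<longleftrightarrow> \<bar>a\<bar> * \<bar>b\<bar> \<le> \<bar>a'\<bar> * \<bar>b'\<bar>"
    by (rule hull_mem[OF D1 pos X1 Y1 Y1'])
  have HX': "X' \<in> convex hull {Ov, Y, Y'} \<longleftrightarrow> \<bar>a'\<bar> * \<bar>b'\<bar> \<le> \<bar>a\<bar> * \<bar>b\<bar>"
    by (rule hull_mem[OF D1 pos(3,4,1,2) X1' Y1s])
  have C: "\<bar>a\<bar> * \<bar>b\<bar> = \<bar>a'\<bar> * \<bar>b'\<bar> \<Longrightarrow> collinear {X, Y, X', Y'}"
    by (rule core_coll[OF pos _ X1 X1' Y1 Y1'])
  define k where "k = \<bar>D\<bar> * \<bar>D\<bar> / (norm d * norm e)"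
  have i1: "disprod l l' X < disprod l l' X' \<longleftrightarrow> \<bar>a\<bar> * \<bar>b\<bar> < \<bar>a'\<bar> * \<bar>b'\<bar>"
    unfolding dpX dpX' k_def[symmetric] using K k_def mult_less_cancel_right_pos by metis
  have i2: "disprod l l' X > disprod l l' X' \<longleftrightarrow> \<bar>a\<bar> * \<bar>b\<bar> > \<bar>a'\<bar> * \<bar>b'\<bar>"
    unfolding dpX dpX' k_def[symmetric] using K k_def mult_less_cancel_right_pos by metis
  have i3: "disprod l l' X = disprod l l' X' \<longleftrightarrow> \<bar>a\<bar> * \<bar>b\<bar> = \<bar>a'\<bar> * \<bar>b'\<bar>"
    unfolding dpX dpX' k_def[symmetric] using K k_def by (metis less_irrefl mult_cancel_right)
  show ?thesis
    unfolding i1 i2 i3 using HX HX' C by auto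
qed
end
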